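(* Let $w\ge 2$, $h\ge 3$ and $G=P_w(U)\sqcap C_h$. (1) If $U=\{1\}$ or $U=\{w\}$, then $Z(G)\le\lceil h/2\rceil$. (2) If $U=\{i\}$ with $1<i<w$, then $Z(G)\le h$.
   Context: All graphs are finite, simple and undirected. Zero forcing: given a graph $G$ and a set $S\subseteq V(G)$ of initially filled vertices, the color change rule says that if a filled vertex $v$ has exactly one unfilled neighbor $u$, then $v$ forces $u$ to become filled. $S$ is a zero forcing set if repeatedly applying this rule eventually fills every vertex of $G$. The zero forcing number $Z(G)$ is the minimum cardinality of a zero forcing set of $G$. The path $P_n$ has vertex set $\{1,\dots,n\}$ and edges $\{k,k+1\}$ for $1\le k\le n-1$; the cycle $C_n$ ($n\ge3$) has vertex set $\{1,\dots,n\}$ and edges $\{k,k+1\}$ for $1\le k\le n-1$ together with $\{n,1\}$. Generalized hierarchical product: for graphs $W,H$ and $U\subseteq V(W)$ (the root set), $W(U)\sqcap H$ is the graph with vertex set $V(W)\times V(H)$ in which $(x_1,y_1)$ and $(x_2,y_2)$ are adjacent iff either ($x_1=x_2\in U$ and $y_1y_2\in E(H)$) or ($y_1=y_2$ and $x_1x_2\in E(W)$). *)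

theory Defs
  imports Complex_Main
begin

text \<open>A finite simple graph is given by a vertex set and a symmetric irreflexive
adjacency relation; only adjacencies between vertices of the vertex set matter.\<close>

type_synonym 'a graph = "'a set \<times> ('a \<Rightarrow> 'a \<Rightarrow> bool)"

definition verts :: "'a graph \<Rightarrow> 'a set" where "verts G = fst G"
definition adj :: "'a graph \<Rightarrow> 'a \<Rightarrow> 'a \<Rightarrow> bool" where "adj G = snd G"

inductive_set filled :: "'a graph \<Rightarrow> 'a set \<Rightarrow> 'a set" for G S where
  init: "v \<in> S \<Longrightarrow> v \<in> filled G S"
| force: "\<lbrakk> v \<in> filled G S; u \<in> verts G; adj G v u;
            \<forall>x\<in>verts G. adj G v x \<and> x \<noteq> u \<longrightarrow> x \<in> filled G S \<rbrakk>
          \<Longrightarrow> u \<in> filled G S"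

definition zero_forcing_set :: "'a graph \<Rightarrow> 'a set \<Rightarrow> bool" where
  "zero_forcing_set G S \<longleftrightarrow> S \<subseteq> verts G \<and> verts G \<subseteq> filled G S"

definition zero_forcing_number :: "'a graph \<Rightarrow> nat" where
  "zero_forcing_number G = Min (card ` {S. zero_forcing_set G S})"

definition path_graph :: "nat \<Rightarrow> nat graph" where
  "path_graph n = ({1..n}, \<lambda>x y. y = x + 1 \<or> x = y + 1)"

definition cycle_graph :: "nat \<Rightarrow> nat graph" where
  "cycle_graph n = ({1..n}, \<lambda>x y. y = x + 1 \<or> x = y + 1 \<or> (x = n \<and> y = 1) \<or> (x = 1 \<and> y = n))"

definition hier_prod :: "'a graph \<Rightarrow> 'a set \<Rightarrow> 'b graph \<Rightarrow> ('a \<times> 'b) graph" where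
  "hier_prod W U H = (verts W \<times> verts H,
     \<lambda>(x1, y1) (x2, y2). (x1 = x2 \<and> x1 \<in> U \<and> adj H y1 y2) \<or> (y1 = y2 \<and> adj W x1 x2))"

end

theory Submission imports Defs begin

lemma verts_G: "verts (hier_prod (path_graph w) U (cycle_graph h)) = {1..w}\<times>{1..h}"
  by (simp add: hier_prod_def verts_def path_graph_def cycle_graph_def)

lemma adj_G: "adj (hier_prod (path_graph w) U (cycle_graph h)) (x1,y1) (x2,y2) \<longleftrightarrow>
   (x1 = x2 \<and> x1 \<in> U \<and> (y2 = y1+1 \<or> y1 = y2+1 \<or> (y1 = h \<and> y2 = 1) \<or> (y1 = 1 \<and> y2 = h)))
   \<or> (y1 = y2 \<and> (x2 = x1+1 \<or> x1 = x2+1))"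
  by (simp add: hier_prod_def adj_def path_graph_def cycle_graph_def)

lemma zfn_le:
  assumes "zero_forcing_set G S" "finite (verts G)"
  shows "zero_forcing_number G \<le> card S"
proof -
  have "{S. zero_forcing_set G S} \<subseteq> Pow (verts G)" by (auto simp: zero_forcing_set_def)
  hence "finite {S. zero_forcing_set G S}" using assms(2) finite_subset by blast
  thus ?thesis unfolding zero_forcing_number_def using assms(1) by (simp add: Min_le)
qed

lemma L_up:
  fixes w h x :: nat and U :: "nat set" and G defines "G \<equiv> hier_prod (path_graph w) U (cycle_graph h)"
  assumes col: "\<forall>y\<in>{1..h}. (1,y) \<in> filled G S"
  shows "\<forall>y\<in>{1..h}. (x,y) \<in> filled G S \<or> x < 1 \<or> x > w"
proof (induction x rule: less_induct)
  case (less x)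
  show ?case
  proof (cases "x \<le> 1")
    case True thus ?thesis using col by (auto simp: le_Suc_eq)
  next
    case False
    then obtain x0 where x0: "x = Suc x0" "x0 \<ge> 1" by (cases x) auto
    show ?thesis
    proof (intro ballI)
      fix y assume y: "y \<in> {1..h}"
      show "(x,y) \<in> filled G S \<or> x < 1 \<or> x > w"
      proof (cases "x > w")
        case True thus ?thesis by simp
      next
        case False
        have ih1: "\<forall>y\<in>{1..h}. (x0,y) \<in> filled G S" using less[of x0] x0 False by auto
        have ih2: "\<forall>y\<in>{1..h}. (x0-1,y) \<in> filled G S \<or> x0 - 1 < 1" using less[of "x0-1"] x0 False by auto
        have "(x,y) \<in> filled G S"
          apply (rule filled.force[where v="(x0,y)"])
          using y ih1 ih2 x0 False
          by (auto simp: G_def verts_G adj_G)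
        thus ?thesis by simp
      qed
    qed
  qed
qed


lemma L_down:
  fixes w h d :: nat and U :: "nat set" and G defines "G \<equiv> hier_prod (path_graph w) U (cycle_graph h)"
  assumes col: "\<forall>y\<in>{1..h}. (w,y) \<in> filled G S"
  shows "\<forall>y\<in>{1..h}. (w-d,y) \<in> filled G S \<or> w - d < 1"
proof (induction d rule: less_induct)
  case (less d)
  show ?case
  proof (cases "d = 0")
    case True thus ?thesis using col by auto
  next
    case False
    then obtain d0 where d0: "d = Suc d0" by (cases d) auto
    show ?thesis
    proof (intro ballI)
      fix y assume y: "y \<in> {1..h}"
      show "(w-d,y) \<in> filled G S \<or> w-d < 1"
      proof (cases "w - d < 1")
        case True thus ?thesis by simp
      next
        case False
        have ih1: "\<forall>y\<in>{1..h}. (w-d0,y) \<in> filled G S" using less[of d0] d0 False by auto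
        have ih2: "\<forall>y\<in>{1..h}. (Suc (w-d0),y) \<in> filled G S \<or> Suc (w-d0) > w"
        proof (cases d0)
          case (Suc d1) thus ?thesis using less[of d1] d0 False by (auto simp: Suc_diff_Suc)
        qed simp
        have "(w-d,y) \<in> filled G S"
          apply (rule filled.force[where v="(w-d0,y)"])
          using y ih1 ih2 d0 False col
          by (auto simp: G_def verts_G adj_G)
        thus ?thesis by simp
      qed
    qed
  qed
qed

lemma row_down:
  fixes w h d y :: nat and U :: "nat set" and G defines "G \<equiv> hier_prod (path_graph w) U (cycle_graph h)"
  assumes U: "U \<subseteq> {1}" and st: "(w,y) \<in> filled G S" and y: "y \<in> {1..h}"
  shows "(w-d,y) \<in> filled G S \<or> w - d < 1"
proof (induction d rule: less_induct)
  case (less d)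
  show ?case
  proof (cases "d = 0")
    case True thus ?thesis using st by auto
  next
    case False
    then obtain d0 where d0: "d = Suc d0" by (cases d) auto
    show ?thesis
    proof (cases "w - d < 1")
      case True thus ?thesis by simp
    next
      case False
      have ih1: "(w-d0,y) \<in> filled G S" using less[of d0] d0 False by auto
      have ih2: "(Suc (w-d0),y) \<in> filled G S \<or> Suc (w-d0) > w"
      proof (cases d0)
        case (Suc d1) thus ?thesis using less[of d1] d0 False by (auto simp: Suc_diff_Suc)
      qed simp
      have "(w-d,y) \<in> filled G S"
        apply (rule filled.force[where v="(w-d0,y)"])
        using y ih1 ih2 d0 False st U
        by (auto simp: G_def verts_G adj_G)
      thus ?thesis by simp
    qed
  qed
qed

lemma row_up:
  fixes w h x y :: nat and U :: "nat set" and G defines "G \<equiv> hier_prod (path_graph w) U (cycle_graph h)"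
  assumes U: "U \<subseteq> {w}" and st: "(1,y) \<in> filled G S" and y: "y \<in> {1..h}"
  shows "(x,y) \<in> filled G S \<or> x < 1 \<or> x > w"
proof (induction x rule: less_induct)
  case (less x)
  show ?case
  proof (cases "x \<le> 1")
    case True thus ?thesis using st by (auto simp: le_Suc_eq)
  next
    case False
    then obtain x0 where x0: "x = Suc x0" "x0 \<ge> 1" by (cases x) auto
    show ?thesis
    proof (cases "x > w")
      case True thus ?thesis by simp
    next
      case False
      have ih1: "(x0,y) \<in> filled G S" using less[of x0] x0 False by auto
      have ih2: "(x0-1,y) \<in> filled G S \<or> x0 - 1 < 1" using less[of "x0-1"] x0 False by auto
      have "(x,y) \<in> filled G S"
        apply (rule filled.force[where v="(x0,y)"])
        using y ih1 ih2 x0 False U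
        by (auto simp: G_def verts_G adj_G)
      thus ?thesis by simp
    qed
  qed
qed

lemma cyc:
  fixes w h c y :: nat and U Y :: "nat set" and G defines "G \<equiv> hier_prod (path_graph w) U (cycle_graph h)"
  assumes h: "h \<ge> 3" and c: "c \<in> U" "c \<in> {1..w}"
    and rows: "\<And>x y. y \<in> Y \<Longrightarrow> x \<in> {1..w} \<Longrightarrow> (x,y) \<in> filled G S"
    and Y1: "1 \<in> Y" and Yev: "\<And>y. even y \<Longrightarrow> 2 \<le> y \<Longrightarrow> y < h \<Longrightarrow> y \<in> Y"
  shows "y \<in> {1..h} \<longrightarrow> (c,y) \<in> filled G S"
proof (induction y rule: less_induct)
  case (less y)
  show ?case
  proof
    assume y: "y \<in> {1..h}"
    have Y2: "2 \<in> Y" using Yev h by auto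
    show "(c,y) \<in> filled G S"
    proof (cases "y \<in> Y")
      case True thus ?thesis using rows c by auto
    next
      case nY: False
      show ?thesis
      proof (cases "y = h")
        case True
        have c2: "(c,Suc (Suc 0)) \<in> filled G S" using rows[OF Y2] c by (auto simp: numeral_2_eq_2)
        show ?thesis unfolding True
          apply (rule filled.force[where v="(c,1)"])
          using h c rows Y1 c2
          by (auto simp: G_def verts_G adj_G)
      next
        case False
        have yn1: "y \<noteq> 1" using nY Y1 by auto
        have yn2: "y \<noteq> 2" using nY Y2 by auto
        have yl: "y < h" using False y by auto
        have yodd: "odd y" using nY Yev[of y] yl yn1 y by (cases "2 \<le> y") auto
        have y3: "3 \<le> y" using yn1 yn2 y by auto
        have ih: "(c,y-2) \<in> filled G S" using less[of "y-2"] y3 y by auto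
        have Ym: "y - 1 \<in> Y" using Yev[of "y-1"] y3 yl yodd by auto
        have nb: "\<forall>z\<in>verts G. adj G (c,y-1) z \<and> z \<noteq> (c,y) \<longrightarrow> z \<in> filled G S"
        proof (intro ballI impI)
          fix z assume z: "z \<in> verts G" "adj G (c,y-1) z \<and> z \<noteq> (c,y)"
          obtain a b where ab: "z = (a,b)" by (cases z)
          have abv: "a \<in> {1..w}" "b \<in> {1..h}" using z(1) ab by (auto simp: G_def verts_G)
          have "adj G (c,y-1) (a,b)" "(a,b) \<noteq> (c,y)" using z ab by auto
          hence "(a = c \<and> b = y - 2) \<or> b = y - 1"
            using y3 yl unfolding G_def adj_G by auto
          thus "z \<in> filled G S" using ih rows[OF Ym] abv ab by auto
        qed
        have uv: "(c,y) \<in> verts G" using c y by (auto simp: G_def verts_G)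
        have ad: "adj G (c,y-1) (c,y)" using c y3 by (auto simp: G_def adj_G)
        have vf: "(c,y-1) \<in> filled G S" using rows[OF Ym] c by auto
        show ?thesis by (rule filled.force[OF vf uv ad nb])
      qed
    qed
  qed
qed


lemma cardY: "card ({1} \<union> (\<lambda>k. 2*k) ` {1..(h-1) div 2}) = 1 + (h-1) div 2"
proof -
  have "card ((\<lambda>k. 2*k) ` {1..(h-1) div 2}) = (h-1) div 2"
    by (subst card_image) (auto simp: inj_on_def)
  moreover have "1 \<notin> (\<lambda>k. 2*k) ` {1..(h-1) div 2}" by auto
  ultimately show ?thesis by simp
qed

lemma Yprops:
  fixes h :: nat assumes "h \<ge> 3"
  defines "Y \<equiv> {1} \<union> (\<lambda>k. 2*k) ` {1..(h-1) div 2}"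
  shows "1 \<in> Y" "\<And>y. even y \<Longrightarrow> 2 \<le> y \<Longrightarrow> y < h \<Longrightarrow> y \<in> Y" "Y \<subseteq> {1..h}"
proof -
  show "1 \<in> Y" by (simp add: Y_def)
  show "\<And>y. even y \<Longrightarrow> 2 \<le> y \<Longrightarrow> y < h \<Longrightarrow> y \<in> Y"
  proof -
    fix y :: nat assume "even y" "2 \<le> y" "y < h"
    then obtain k where k: "y = 2*k" by (auto elim: evenE)
    hence "k \<in> {1..(h-1) div 2}" using \<open>2 \<le> y\<close> \<open>y < h\<close> by auto
    thus "y \<in> Y" using k by (auto simp: Y_def)
  qed
  show "Y \<subseteq> {1..h}" using assms(1) by (auto simp: Y_def)
qed

lemma part1:
  fixes w h :: nat and U :: "nat set"
  assumes w: "w \<ge> 2" and h: "h \<ge> 3" and U: "U = {1} \<or> U = {w}"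
  shows "int (zero_forcing_number (hier_prod (path_graph w) U (cycle_graph h))) \<le> \<lceil>real h / 2\<rceil>"
proof -
  define G where "G = hier_prod (path_graph w) U (cycle_graph h)"
  define Y where "Y = {1} \<union> (\<lambda>k. 2*k) ` {1..(h-1) div 2}"
  note Yp = Yprops[OF h, folded Y_def]
  have fin: "finite (verts G)" by (simp add: G_def verts_G)
  obtain S where zS: "zero_forcing_set G S" and cS: "card S = card Y"
  proof (cases "U = {1}")
    case True
    define S where "S = {w} \<times> Y"
    have rows: "\<And>x y. y \<in> Y \<Longrightarrow> x \<in> {1..w} \<Longrightarrow> (x,y) \<in> filled G S"
    proof -
      fix x y assume y: "y \<in> Y" and x: "x \<in> {1..w}"
      have st: "(w,y) \<in> filled G S" by (rule filled.init) (simp add: S_def y)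
      have yh: "y \<in> {1..h}" using Yp(3) y by auto
      from row_down[where U=U and w=w and h=h and S=S and y=y and d="w - x", folded G_def, OF _ st] True yh x
      show "(x,y) \<in> filled G S" by auto
    qed
    have col: "\<forall>y\<in>{1..h}. (1,y) \<in> filled G S"
      using cyc[where h=h and c=1 and U=U and w=w and Y=Y and S=S, folded G_def, OF h _ _ rows Yp(1) Yp(2)] True w by auto
    have "zero_forcing_set G S"
      unfolding zero_forcing_set_def
    proof
      show "S \<subseteq> verts G" using Yp(3) w by (auto simp: S_def G_def verts_G)
      show "verts G \<subseteq> filled G S"
      proof
        fix z assume "z \<in> verts G"
        then obtain x y where "z = (x,y)" "x \<in> {1..w}" "y \<in> {1..h}" by (auto simp: G_def verts_G)
        thus "z \<in> filled G S" using L_up[where h=h and U=U and w=w and S=S and x=x, folded G_def, OF col] by auto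
      qed
    qed
    moreover have "card S = card Y" by (simp add: S_def card_cartesian_product)
    ultimately show ?thesis using that by blast
  next
    case False
    hence Uw: "U = {w}" using U by auto
    define S where "S = {1::nat} \<times> Y"
    have rows: "\<And>x y. y \<in> Y \<Longrightarrow> x \<in> {1..w} \<Longrightarrow> (x,y) \<in> filled G S"
    proof -
      fix x y assume y: "y \<in> Y" and x: "x \<in> {1..w}"
      have st: "(1,y) \<in> filled G S" by (rule filled.init) (simp add: S_def y)
      have yh: "y \<in> {1..h}" using Yp(3) y by auto
      from row_up[where U=U and w=w and h=h and S=S and y=y and x=x, folded G_def, OF _ st] Uw yh x
      show "(x,y) \<in> filled G S" by auto
    qed
    have col: "\<forall>y\<in>{1..h}. (w,y) \<in> filled G S"
      using cyc[where h=h and c=w and U=U and w=w and Y=Y and S=S, folded G_def, OF h _ _ rows Yp(1) Yp(2)] Uw w by auto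
    have "zero_forcing_set G S"
      unfolding zero_forcing_set_def
    proof
      show "S \<subseteq> verts G" using Yp(3) w by (auto simp: S_def G_def verts_G)
      show "verts G \<subseteq> filled G S"
      proof
        fix z assume "z \<in> verts G"
        then obtain x y where xy: "z = (x,y)" "x \<in> {1..w}" "y \<in> {1..h}" by (auto simp: G_def verts_G)
        have "w - (w - x) = x" using xy by auto
        thus "z \<in> filled G S" using L_down[where w=w and U=U and h=h and S=S and d="w - x", folded G_def, OF col] xy by auto
      qed
    qed
    moreover have "card S = card Y" by (simp add: S_def card_cartesian_product)
    ultimately show ?thesis using that by blast
  qed
  have "zero_forcing_number G \<le> 1 + (h-1) div 2"
    using zfn_le[OF zS fin] cS cardY[of h] by (simp add: Y_def)
  moreover have "int (1 + (h-1) div 2) \<le> \<lceil>real h / 2\<rceil>"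
  proof -
    have "2 * ((h-1) div 2) \<le> h - 1" by simp
    hence "real ((h-1) div 2) < real h / 2" using h by linarith
    hence "real_of_int (int (1 + (h-1) div 2)) - 1 < real h / 2" by simp
    thus ?thesis by (simp only: le_ceiling_iff)
  qed
  ultimately show ?thesis unfolding G_def by linarith
qed

lemma part2:
  fixes w h :: nat and U :: "nat set"
  assumes w: "w \<ge> 2" and h: "h \<ge> 3"
  shows "zero_forcing_number (hier_prod (path_graph w) U (cycle_graph h)) \<le> h"
proof -
  define G where "G = hier_prod (path_graph w) U (cycle_graph h)"
  define S where "S = {1::nat} \<times> {1..h}"
  have col: "\<forall>y\<in>{1..h}. (1,y) \<in> filled G S" by (auto simp: S_def intro: filled.init)
  have zS: "zero_forcing_set G S"
    unfolding zero_forcing_set_def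
  proof
    show "S \<subseteq> verts G" using w by (auto simp: S_def G_def verts_G)
    show "verts G \<subseteq> filled G S"
    proof
      fix z assume "z \<in> verts G"
      then obtain x y where "z = (x,y)" "x \<in> {1..w}" "y \<in> {1..h}" by (auto simp: G_def verts_G)
      thus "z \<in> filled G S" using L_up[where h=h and U=U and w=w and S=S and x=x, folded G_def, OF col] by auto
    qed
  qed
  have "card S = h" by (simp add: S_def card_cartesian_product)
  thus ?thesis using zfn_le[OF zS] by (simp add: G_def verts_G)
qed

theorem mainTheorem8:
  fixes w h i :: nat and U :: "nat set"
  assumes "w \<ge> 2" and "h \<ge> 3"
  shows "(U = {1} \<or> U = {w} \<longrightarrow>
            int (zero_forcing_number (hier_prod (path_graph w) U (cycle_graph h)))
              \<le> \<lceil>real h / 2\<rceil>)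
       \<and> (1 < i \<and> i < w \<longrightarrow>
            zero_forcing_number (hier_prod (path_graph w) {i} (cycle_graph h)) \<le> h)"
  using part1[OF assms] part2[OF assms] by blast

end
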